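(* Let $N\ge2$. The following rules define an action of the braid-cyclic group $BC_N$ on the set of all trees with $N$ edges labelled bijectively by $0,1,\dots,N-1$ (considered up to label-preserving isomorphism): (1) the generator $u_k$ ($1\le k\le N-1$) affects only the edges labelled $k-1$ and $k$: (a) if these two edges have no common vertex, they exchange their labels (the tree is unchanged); (b) if the edge labelled $k-1$ joins vertices $A$ and $B$ and the edge labelled $k$ joins $A$ and $C$, then the edge $AB$ receives label $k$, the edge $AC$ is erased, and a new edge $BC$ is drawn and labelled $k-1$; (2) the generator $\lambda$ does not change the tree but shifts the edge labels cyclically, $i\mapsto i+1 \pmod N$.
   Context: The braid-cyclic group $BC_N$ is the subgroup of $\mathrm{Aut}(F(s_0,\dots,s_{N-1}))$ ($F$ the free group on $s_0,\dots,s_{N-1}$) generated by $\lambda$ and $u_1,\dots,u_{N-1}$, where $\lambda(s_k)=s_{k+1}$ (indices mod $N$), $u_k(s_{k-1})=s_k$, $u_k(s_k)=s_k^{-1}s_{k-1}s_k$, and $u_k(s_l)=s_l$ for $l\ne k-1,k$. *)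

theory Defs
  imports "HOL-Algebra.Bij"
begin

text \<open>A letter (i, True) is s_i, a letter (i, False) is s_i^{-1}.\<close>
type_synonym word = "(nat \<times> bool) list"

fun red :: "word \<Rightarrow> word" where
  "red [] = []"
| "red (x # xs) = (case red xs of
      [] \<Rightarrow> [x]
    | y # ys \<Rightarrow> (if fst x = fst y \<and> snd x \<noteq> snd y then ys else x # y # ys))"

definition winv :: "word \<Rightarrow> word" where
  "winv w = rev (map (\<lambda>(i, b). (i, \<not> b)) w)"

text \<open>An endomorphism of the free group is represented by the (reduced) images of the
  generators; generators s_i with i >= N are never used and are kept fixed.\<close>
type_synonym endo = "nat \<Rightarrow> word"

definition subst :: "endo \<Rightarrow> word \<Rightarrow> word" where
  "subst \<phi> w = concat (map (\<lambda>(i, b). if b then \<phi> i else winv (\<phi> i)) w)"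

definition comp_endo :: "endo \<Rightarrow> endo \<Rightarrow> endo" where
  "comp_endo \<phi> \<psi> = (\<lambda>i. red (subst \<phi> (\<psi> i)))"

definition id_endo :: endo where
  "id_endo = (\<lambda>i. [(i, True)])"

definition lam_aut :: "nat \<Rightarrow> endo" where
  "lam_aut N = (\<lambda>i. if i < N then [((i + 1) mod N, True)] else [(i, True)])"

definition lam_inv_aut :: "nat \<Rightarrow> endo" where
  "lam_inv_aut N = (\<lambda>i. if i < N then [((i + N - 1) mod N, True)] else [(i, True)])"

definition u_aut :: "nat \<Rightarrow> endo" where
  "u_aut k = (\<lambda>i. if i = k - 1 then [(k, True)]
                  else if i = k then [(k, False), (k - 1, True), (k, True)]
                  else [(i, True)])"

definition u_inv_aut :: "nat \<Rightarrow> endo" where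
  "u_inv_aut k = (\<lambda>i. if i = k then [(k - 1, True)]
                  else if i = k - 1 then [(k - 1, True), (k, True), (k - 1, False)]
                  else [(i, True)])"

definition BC_gens :: "nat \<Rightarrow> endo set" where
  "BC_gens N = {lam_aut N, lam_inv_aut N} \<union> (\<Union>k\<in>{1..N-1}. {u_aut k, u_inv_aut k})"

inductive_set BC_set :: "nat \<Rightarrow> endo set" for N where
  BC_id: "id_endo \<in> BC_set N"
| BC_step: "g \<in> BC_gens N \<Longrightarrow> x \<in> BC_set N \<Longrightarrow> comp_endo g x \<in> BC_set N"

definition BC :: "nat \<Rightarrow> endo monoid" where
  "BC N = \<lparr>carrier = BC_set N, mult = comp_endo, one = id_endo\<rparr>"

text \<open>A tree with N edges labelled 0..N-1, realised on vertex set {0..N}: edge i is e i.\<close>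
type_synonym ltree = "nat \<Rightarrow> nat set"

definition is_ltree :: "nat \<Rightarrow> ltree \<Rightarrow> bool" where
  "is_ltree N e \<longleftrightarrow>
     (\<forall>i<N. \<exists>a b. a \<le> N \<and> b \<le> N \<and> a \<noteq> b \<and> e i = {a, b}) \<and>
     (\<forall>i\<ge>N. e i = {}) \<and>
     (\<forall>v\<le>N. (0, v) \<in> {(a, b). \<exists>i<N. e i = {a, b}}\<^sup>*)"

definition tree_iso_rel :: "nat \<Rightarrow> (ltree \<times> ltree) set" where
  "tree_iso_rel N = {(e, e'). is_ltree N e \<and> is_ltree N e' \<and>
      (\<exists>\<pi>. bij_betw \<pi> {0..N} {0..N} \<and> (\<forall>i<N. e' i = \<pi> ` e i))}"

definition tree_classes :: "nat \<Rightarrow> ltree set set" where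
  "tree_classes N = {e. is_ltree N e} // tree_iso_rel N"

definition tree_class :: "nat \<Rightarrow> ltree \<Rightarrow> ltree set" where
  "tree_class N e = tree_iso_rel N `` {e}"

definition u_op :: "nat \<Rightarrow> ltree \<Rightarrow> ltree" where
  "u_op k e = (if e (k - 1) \<inter> e k = {}
     then e(k - 1 := e k, k := e (k - 1))
     else e(k - 1 := (e (k - 1) - e k) \<union> (e k - e (k - 1)), k := e (k - 1)))"

definition lam_op :: "nat \<Rightarrow> ltree \<Rightarrow> ltree" where
  "lam_op N e = (\<lambda>j. if j < N then e ((j + N - 1) mod N) else {})"

end

theory Submission
  imports Defs "HOL-Combinatorics.Transposition"
begin


definition tr :: "nat set \<Rightarrow> nat \<Rightarrow> nat" where
  "tr S = (if card S = 2 then (SOME p. \<exists>a b. a \<noteq> b \<and> S = {a,b} \<and> p = transpose a b) else id)"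

lemma tr_pair: "a \<noteq> b \<Longrightarrow> tr {a,b} = transpose a b"
proof -
  assume ab: "a \<noteq> b"
  have "\<exists>a' b'. a' \<noteq> b' \<and> {a,b} = {a',b'} \<and> transpose a b = transpose a' b'" using ab by blast
  hence ex: "\<exists>p. \<exists>a' b'. a' \<noteq> b' \<and> {a,b} = {a',b'} \<and> p = transpose a' b'" by blast
  from someI_ex[OF ex] obtain a' b' where h: "a' \<noteq> b'" "{a,b} = {a',b'}"
    "(SOME p. \<exists>a' b'. a' \<noteq> b' \<and> {a,b} = {a',b'} \<and> p = transpose a' b') = transpose a' b'" by blast
  have "transpose a' b' = transpose a b" using h(1,2) ab
    by (metis doubleton_eq_iff transpose_commute)
  then show ?thesis using h ab unfolding tr_def by simp
qed

lemma tr_other: "card S \<noteq> 2 \<Longrightarrow> tr S = id"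
  by (simp add: tr_def)

lemma tr_cases:
  obtains a b where "a \<noteq> b" "S = {a,b}" "tr S = transpose a b"
  | "card S \<noteq> 2" "tr S = id"
  by (metis card_2_iff tr_other tr_pair)

lemma tr_invol[simp]: "tr S \<circ> tr S = id"
  by (cases S rule: tr_cases) auto

lemma tr_invol2[simp]: "tr S \<circ> (tr S \<circ> f) = f"
  by (simp add: comp_assoc[symmetric])

lemma tr_invol'[simp]: "tr S (tr S x) = x"
  using tr_invol[of S] by (metis comp_apply id_apply)

lemma bij_tr[simp]: "bij (tr S)"
  by (cases S rule: tr_cases) auto

lemma inv_tr[simp]: "inv_into UNIV (tr S) = tr S"
  by (cases S rule: tr_cases) auto

lemma bij_inv_comp[simp]:
  "bij p \<Longrightarrow> p \<circ> inv_into UNIV p = id"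
  "bij p \<Longrightarrow> inv_into UNIV p \<circ> p = id"
  "bij p \<Longrightarrow> p \<circ> (inv_into UNIV p \<circ> f) = f"
  "bij p \<Longrightarrow> inv_into UNIV p \<circ> (p \<circ> f) = f"
  by (auto simp: fun_eq_iff bij_is_inj bij_is_surj surj_f_inv_f)

definition supp :: "(nat \<Rightarrow> nat) \<Rightarrow> nat set" where
  "supp p = {x. p x \<noteq> x}"

lemma supp_id[simp]: "supp id = {}"
  by (simp add: supp_def)

lemma supp_tr: "supp (tr S) = (if card S = 2 then S else {})"
  by (cases S rule: tr_cases) (auto simp: supp_def transpose_def)

lemma tr_supp_tr[simp]: "tr (supp (tr S)) = tr S"
  by (cases "card S = 2") (auto simp: supp_tr tr_other)

lemma tr_conj: "bij p \<Longrightarrow> tr (p ` S) = p \<circ> tr S \<circ> inv_into UNIV p"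
proof (cases S rule: tr_cases)
  case (1 a b)
  assume bp: "bij p"
  hence "p a \<noteq> p b" using 1 by (metis bij_is_inj inj_eq)
  hence "tr (p ` S) = transpose (p a) (p b)" using 1 by (simp add: tr_pair)
  also have "\<dots> = p \<circ> tr S \<circ> inv_into UNIV p"
  proof
    fix x
    have "transpose (p a) (p b) (p (inv_into UNIV p x)) = p (transpose (inv_into UNIV p (p a)) (inv_into UNIV p (p b)) (inv_into UNIV p x))"
      using transpose_apply_commute[OF bp] by blast
    then show "transpose (p a) (p b) x = (p \<circ> tr S \<circ> inv_into UNIV p) x"
      using bp 1 by (simp add: bij_is_inj bij_is_surj surj_f_inv_f)
  qed
  finally show ?thesis .
next
  case 2
  assume bp: "bij p"
  have "card (p ` S) = card S" using bp by (meson bij_betw_def card_image inj_on_subset subset_UNIV)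
  then show ?thesis using 2 bp by (simp add: tr_other bij_is_surj surj_iff)
qed

lemma supp_conj: "bij p \<Longrightarrow> supp (p \<circ> q \<circ> inv_into UNIV p) = p ` supp q"
  apply (auto simp: supp_def bij_inv_eq_iff image_iff)
  apply (metis bij_inv_eq_iff)
  by (metis bij_inv_eq_iff)

fun ev :: "ltree \<Rightarrow> word \<Rightarrow> nat \<Rightarrow> nat" where
  "ev e [] = id"
| "ev e (x # xs) = tr (e (fst x)) \<circ> ev e xs"

lemma ev_append[simp]: "ev e (xs @ ys) = ev e xs \<circ> ev e ys"
  by (induction xs) (auto simp: comp_assoc)

lemma ev_red[simp]: "ev e (red w) = ev e w"
proof (induction w)
  case Nil then show ?case by simp
next
  case (Cons x xs)
  show ?case
  proof (cases "red xs")
    case Nil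
    have "ev e xs = id" using Cons.IH Nil by (simp add: fun_eq_iff)
    then show ?thesis using Nil by simp
  next
    case (Cons y ys)
    have h: "ev e xs = tr (e (fst y)) \<circ> ev e ys" using Cons.IH Cons by (simp add: fun_eq_iff)
    show ?thesis using Cons h
      by (auto simp del: ev.simps simp add: ev.simps(2) comp_assoc[symmetric])
  qed
qed

lemma ev_rev_comp: "ev e (rev w) \<circ> ev e w = id"
proof (induction w)
  case Nil then show ?case by simp
next
  case (Cons x xs)
  have "ev e (rev (x # xs)) \<circ> ev e (x # xs) = ev e (rev xs) \<circ> (tr (e (fst x)) \<circ> tr (e (fst x))) \<circ> ev e xs"
    by (simp add: comp_assoc)
  also have "\<dots> = id" using Cons by (simp add: fun_eq_iff)
  finally show ?case .
qed

lemma ev_winv_comp: "ev e (winv w) \<circ> ev e w = id"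
proof -
  have "ev e (winv w) = ev e (rev w)"
    unfolding winv_def
    by (induction w) (auto split: prod.splits)
  then show ?thesis using ev_rev_comp by simp
qed

lemma ev_winv_tr: "ev e w = tr S \<Longrightarrow> ev e (winv w) = tr S"
proof -
  assume h: "ev e w = tr S"
  have "ev e (winv w) = ev e (winv w) \<circ> (ev e w \<circ> ev e w)" using h by simp
  also have "\<dots> = ev e w" using ev_winv_comp[of e w] by (simp add: comp_assoc[symmetric])
  finally show ?thesis using h by simp
qed

lemma ev_conj: "bij p \<Longrightarrow> ev (\<lambda>i. p ` e i) w = p \<circ> ev e w \<circ> inv_into UNIV p"
  by (induction w) (auto simp: tr_conj bij_is_surj surj_iff comp_assoc)

definition R :: "endo \<Rightarrow> ltree \<Rightarrow> ltree" where
  "R \<alpha> e = (\<lambda>i. supp (ev e (\<alpha> i)))"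

definition P :: "endo \<Rightarrow> ltree \<Rightarrow> bool" where
  "P \<alpha> e \<longleftrightarrow> (\<forall>i. \<exists>S. ev e (\<alpha> i) = tr S)"

lemma P_tr: "P \<alpha> e \<Longrightarrow> tr (R \<alpha> e i) = ev e (\<alpha> i)"
  unfolding P_def R_def by (metis tr_supp_tr)

lemma ev_subst: "P \<alpha> e \<Longrightarrow> ev e (subst \<alpha> w) = ev (R \<alpha> e) w"
proof (induction w)
  case Nil then show ?case by (simp add: subst_def)
next
  case (Cons x xs)
  obtain i b where x: "x = (i,b)" by force
  have s: "subst \<alpha> (x # xs) = (if b then \<alpha> i else winv (\<alpha> i)) @ subst \<alpha> xs"
    by (simp add: subst_def x)
  obtain S where S: "ev e (\<alpha> i) = tr S" using Cons.prems unfolding P_def by blast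
  have "ev e (if b then \<alpha> i else winv (\<alpha> i)) = tr (R \<alpha> e i)"
    using S ev_winv_tr[OF S] P_tr[OF Cons.prems, of i] by auto
  then show ?case using s Cons x by simp
qed

lemma R_comp: "P \<alpha> e \<Longrightarrow> R (comp_endo \<alpha> \<beta>) e = R \<beta> (R \<alpha> e)"
proof -
  assume a: "P \<alpha> e"
  have "ev e (comp_endo \<alpha> \<beta> i) = ev (R \<alpha> e) (\<beta> i)" for i
    unfolding comp_endo_def using ev_subst[OF a] by simp
  then show ?thesis by (simp add: R_def[of "comp_endo \<alpha> \<beta>"] R_def[of \<beta>])
qed

lemma P_comp: "P \<alpha> e \<Longrightarrow> P \<beta> (R \<alpha> e) \<Longrightarrow> P (comp_endo \<alpha> \<beta>) e"
proof -
  assume a: "P \<alpha> e" and b: "P \<beta> (R \<alpha> e)"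
  have "ev e (comp_endo \<alpha> \<beta> i) = ev (R \<alpha> e) (\<beta> i)" for i
    unfolding comp_endo_def using ev_subst[OF a] by simp
  then show ?thesis using b unfolding P_def by simp
qed

lemma R_conj: "bij p \<Longrightarrow> R \<alpha> (\<lambda>i. p ` e i) = (\<lambda>i. p ` R \<alpha> e i)"
  unfolding R_def by (simp add: ev_conj supp_conj)



lemma tree_edge: "is_ltree N e \<Longrightarrow> i < N \<Longrightarrow> \<exists>a b. a \<le> N \<and> b \<le> N \<and> a \<noteq> b \<and> e i = {a, b}"
  unfolding is_ltree_def by blast

lemma tree_empty: "is_ltree N e \<Longrightarrow> \<not> i < N \<Longrightarrow> e i = {}"
  unfolding is_ltree_def by auto

lemma tree_conn: "is_ltree N e \<Longrightarrow> v \<le> N \<Longrightarrow> (0, v) \<in> {(a, b). \<exists>i<N. e i = {a, b}}\<^sup>*"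
  unfolding is_ltree_def by blast

lemma tree_supp_tr: "is_ltree N e \<Longrightarrow> supp (tr (e i)) = e i"
  by (cases "i < N") (auto simp: supp_tr tree_empty dest!: tree_edge)

lemma tree_sub: "is_ltree N e \<Longrightarrow> e i \<subseteq> {0..N}"
  by (cases "i < N") (auto simp: tree_empty dest!: tree_edge)

lemma R_id: "is_ltree N e \<Longrightarrow> R id_endo e = e"
  by (auto simp: R_def id_endo_def tree_supp_tr)

lemma P_id: "P id_endo e"
  by (auto simp: P_def id_endo_def)

lemma tree_inj:
  assumes t: "is_ltree N e"
  shows "inj_on e {..<N}"
proof -
  define r where "r = {(a, b). \<exists>i<N. e i = {a, b}}"
  define d where "d v = (LEAST n. (0, v) \<in> r ^^ n)" for v
  have ex: "\<exists>u. {u, v} \<in> e ` {..<N} \<and> (u, v) \<in> r \<and> d u < d v" if v: "v \<in> {1..N}" for v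
  proof -
    have "(0, v) \<in> r\<^sup>*" using tree_conn[OF t] v unfolding r_def by auto
    then obtain n where "(0, v) \<in> r ^^ n" using rtrancl_power by blast
    hence dv: "(0, v) \<in> r ^^ d v" unfolding d_def by (rule LeastI)
    have "d v \<noteq> 0" using dv v by (metis atLeastAtMost_iff not_one_le_zero pair_in_Id_conv relpow.simps(1))
    then obtain m where m: "d v = Suc m" using not0_implies_Suc by blast
    with dv obtain u where u: "(0, u) \<in> r ^^ m" "(u, v) \<in> r" by auto
    have "d u \<le> m" unfolding d_def using u(1) by (rule Least_le)
    moreover have "{u, v} \<in> e ` {..<N}" using u(2) unfolding r_def by auto
    ultimately show ?thesis using u m by (intro exI[of _ u]) auto
  qed
  define f where "f v = (SOME S. \<exists>u. S = {u, v} \<and> (u, v) \<in> r \<and> d u < d v)" for v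
  have f: "\<exists>u. f v = {u, v} \<and> (u, v) \<in> r \<and> d u < d v" if "v \<in> {1..N}" for v
  proof -
    have "\<exists>S u. S = {u, v} \<and> (u, v) \<in> r \<and> d u < d v" using ex[OF that] by blast
    from someI_ex[OF this] show ?thesis unfolding f_def by blast
  qed
  have fe: "f v \<in> e ` {..<N}" if "v \<in> {1..N}" for v
    using f[OF that] unfolding r_def by auto
  have "inj_on f {1..N}"
  proof
    fix v w assume v: "v \<in> {1..N}" and w: "w \<in> {1..N}" and eq: "f v = f w"
    obtain u where u: "f v = {u, v}" "d u < d v" using f[OF v] by blast
    obtain u' where u': "f w = {u', w}" "d u' < d w" using f[OF w] by blast
    show "v = w"
    proof (rule ccontr)
      assume "v \<noteq> w"
      hence "v = u'" "w = u" using eq u u' by (auto simp: doubleton_eq_iff)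
      then show False using u u' by simp
    qed
  qed
  hence "card {1..N} \<le> card (e ` {..<N})"
    by (rule card_inj_on_le) (use fe in auto)
  moreover have "card (e ` {..<N}) \<le> card {..<N}" by (rule card_image_le) simp
  ultimately have "card (e ` {..<N}) = card {..<N}" by simp
  then show ?thesis by (simp add: inj_on_iff_eq_card)
qed



lemma tr_empty[simp]: "tr {} = id"
  by (simp add: tr_other)

lemma tr_step: "tr S x = x \<or> {x, tr S x} = S"
  by (cases S rule: tr_cases) (auto simp: transpose_def)

lemma tr_range: "S \<subseteq> {0..N} \<Longrightarrow> x \<le> N \<Longrightarrow> tr S x \<le> N"
  by (cases S rule: tr_cases) (auto simp: transpose_def)

lemma tr_conj3: "tr T \<circ> tr S \<circ> tr T = tr (tr T ` S)"
  using tr_conj[of "tr T" S] by simp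

lemma tree_relabel:
  assumes t: "is_ltree N e" and s1: "\<forall>i<N. \<sigma> i < N" and s2: "\<forall>i<N. \<exists>j<N. \<sigma> j = i"
  shows "is_ltree N (\<lambda>i. if i < N then e (\<sigma> i) else {})"
proof -
  let ?e' = "\<lambda>i. if i < N then e (\<sigma> i) else {}"
  have "{(a, b). \<exists>i<N. e i = {a, b}} \<subseteq> {(a, b). \<exists>i<N. ?e' i = {a, b}}"
    using s2 by fastforce
  hence "{(a, b). \<exists>i<N. e i = {a, b}}\<^sup>* \<subseteq> {(a, b). \<exists>i<N. ?e' i = {a, b}}\<^sup>*"
    by (rule rtrancl_mono)
  hence c: "\<forall>v\<le>N. (0, v) \<in> {(a, b). \<exists>i<N. ?e' i = {a, b}}\<^sup>*"
    using tree_conn[OF t] by blast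
  have ed: "\<forall>i<N. \<exists>a b. a \<le> N \<and> b \<le> N \<and> a \<noteq> b \<and> ?e' i = {a, b}"
    using tree_edge[OF t] s1 by auto
  show ?thesis unfolding is_ltree_def using c ed by auto
qed

lemma tree_hurwitz:
  assumes t: "is_ltree N e" and pq: "p < N" "q < N" "p \<noteq> q"
  shows "is_ltree N (e(p := e q, q := tr (e q) ` e p))"
proof -
  let ?e' = "e(p := e q, q := tr (e q) ` e p)"
  let ?r = "{(a, b). \<exists>i<N. e i = {a, b}}"
  let ?r' = "{(a, b). \<exists>i<N. ?e' i = {a, b}}"
  obtain a b where ab: "a \<le> N" "b \<le> N" "a \<noteq> b" "e p = {a, b}" using tree_edge[OF t pq(1)] by blast
  have sq: "e q \<subseteq> {0..N}" using tree_sub[OF t] .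
  define \<tau> where "\<tau> = tr (e q)"
  have img: "tr (e q) ` e p = {\<tau> a, \<tau> b}" using ab unfolding \<tau>_def by auto
  have tab: "\<tau> a \<noteq> \<tau> b" using ab unfolding \<tau>_def by (metis tr_invol')
  have tr: "\<tau> a \<le> N" "\<tau> b \<le> N" using tr_range[OF sq] ab unfolding \<tau>_def by auto
  have edges: "\<forall>i<N. \<exists>a b. a \<le> N \<and> b \<le> N \<and> a \<noteq> b \<and> ?e' i = {a, b}"
    using tree_edge[OF t] pq img tab tr by auto
  have step: "(x, \<tau> x) \<in> ?r'\<^sup>*" for x
  proof -
    have "\<tau> x = x \<or> {x, \<tau> x} = e q" using tr_step unfolding \<tau>_def by blast
    then show ?thesis
    proof
      assume "{x, \<tau> x} = e q"
      hence "(x, \<tau> x) \<in> ?r'" using pq by (intro CollectI) (auto intro!: exI[of _ p])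
      then show ?thesis by blast
    qed simp
  qed
  have step': "(\<tau> x, x) \<in> ?r'\<^sup>*" for x
  proof -
    have "\<tau> x = x \<or> {x, \<tau> x} = e q" using tr_step unfolding \<tau>_def by blast
    then show ?thesis
    proof
      assume "{x, \<tau> x} = e q"
      hence "(\<tau> x, x) \<in> ?r'" using pq by (intro CollectI) (auto intro!: exI[of _ p] simp: insert_commute)
      then show ?thesis by blast
    qed simp
  qed
  have mid: "(\<tau> x, \<tau> y) \<in> ?r'" if "{x, y} = {a, b}" for x y
  proof -
    have "?e' q = {\<tau> x, \<tau> y}" using img that pq by (auto simp: doubleton_eq_iff)
    then show ?thesis using pq by blast
  qed
  have sub: "?r \<subseteq> ?r'\<^sup>*"
  proof
    fix z assume "z \<in> ?r"
    then obtain x y i where z: "z = (x, y)" "i < N" "e i = {x, y}" by blast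
    show "z \<in> ?r'\<^sup>*"
    proof (cases "i = p")
      case True
      hence xy: "{x, y} = {a, b}" using z ab by simp
      have "(x, \<tau> x) \<in> ?r'\<^sup>*" by (rule step)
      also have "(\<tau> x, \<tau> y) \<in> ?r'\<^sup>*" using mid[OF xy] by blast
      also have "(\<tau> y, y) \<in> ?r'\<^sup>*" by (rule step')
      finally show ?thesis using z by simp
    next
      case False
      show ?thesis
      proof (cases "i = q")
        case True
        hence "?e' p = {x, y}" using z pq by simp
        then show ?thesis using z pq by blast
      next
        case False
        hence "?e' i = {x, y}" using z \<open>i \<noteq> p\<close> by simp
        then show ?thesis using z by blast
      qed
    qed
  qed
  have "?r\<^sup>* \<subseteq> ?r'\<^sup>*" using rtrancl_subset_rtrancl[OF sub] .
  hence c: "\<forall>v\<le>N. (0, v) \<in> ?r'\<^sup>*"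
    using tree_conn[OF t] by blast
  have em: "\<forall>i\<ge>N. ?e' i = {}" using tree_empty[OF t] pq by auto
  show ?thesis unfolding is_ltree_def using c edges em by blast
qed

lemma supp_tr_img:
  assumes t: "is_ltree N e" and p: "p < N"
  shows "supp (tr (tr T ` e p)) = tr T ` e p"
proof -
  have "card (tr T ` e p) = card (e p)"
    by (meson bij_betw_def bij_tr card_image inj_on_subset subset_UNIV)
  moreover have "card (e p) = 2" using tree_edge[OF t p] by auto
  ultimately show ?thesis by (simp add: supp_tr)
qed

lemma P_lam: "P (lam_aut N) e"
  by (auto simp: P_def lam_aut_def)

lemma P_lam_inv: "P (lam_inv_aut N) e"
  by (auto simp: P_def lam_inv_aut_def)

lemma P_u: "P (u_aut k) e"
  unfolding P_def u_aut_def using tr_conj3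
  by (auto simp: comp_assoc)

lemma P_u_inv: "P (u_inv_aut k) e"
  unfolding P_def u_inv_aut_def using tr_conj3
  by (auto simp: comp_assoc)

lemma R_lam: "is_ltree N e \<Longrightarrow> R (lam_aut N) e = (\<lambda>i. if i < N then e ((i + 1) mod N) else {})"
  by (rule ext) (auto simp: R_def lam_aut_def tree_supp_tr tree_empty)

lemma R_lam_inv: "is_ltree N e \<Longrightarrow> R (lam_inv_aut N) e = lam_op N e"
  by (rule ext) (auto simp: R_def lam_inv_aut_def tree_supp_tr tree_empty lam_op_def)

lemma R_u: "is_ltree N e \<Longrightarrow> 1 \<le> k \<Longrightarrow> k < N \<Longrightarrow>
   R (u_aut k) e = e(k - 1 := e k, k := tr (e k) ` e (k - 1))"
  apply (rule ext)
  apply (simp add: R_def u_aut_def tree_supp_tr)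
  apply (auto simp: comp_assoc tr_conj3[simplified comp_assoc] supp_tr_img)
  done

lemma R_u_inv: "is_ltree N e \<Longrightarrow> 1 \<le> k \<Longrightarrow> k < N \<Longrightarrow>
   R (u_inv_aut k) e = e(k := e (k - 1), k - 1 := tr (e (k - 1)) ` e k)"
  apply (rule ext)
  apply (simp add: R_def u_inv_aut_def tree_supp_tr)
  apply (auto simp: comp_assoc tr_conj3[simplified comp_assoc] supp_tr_img)
  done



lemma mod_lemma1: "x < N \<Longrightarrow> Suc ((x + N - Suc 0) mod N) mod N = x"
proof (cases x)
  case 0
  assume "x < N"
  then have "(x + N - Suc 0) mod N = N - 1" using 0 by simp
  then show ?thesis using 0 \<open>x < N\<close> by simp
next
  case (Suc j)
  assume "x < N"
  then have "x + N - Suc 0 = j + 1 * N" using Suc by simp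
  then have "(x + N - Suc 0) mod N = j" using Suc \<open>x < N\<close> by simp
  then show ?thesis using Suc \<open>x < N\<close> by simp
qed

lemma mod_lemma2: "x < N \<Longrightarrow> (Suc x mod N + N - Suc 0) mod N = x"
proof (cases "Suc x = N")
  case True
  then show ?thesis by simp
next
  case False
  assume "x < N"
  then have "Suc x mod N = Suc x" using False by simp
  then have "Suc x mod N + N - Suc 0 = x + 1 * N" by simp
  then show ?thesis using \<open>x < N\<close> by (metis mod_less mod_mult_self1)
qed

lemma comp_lam1: "0 < N \<Longrightarrow> comp_endo (lam_aut N) (lam_inv_aut N) = id_endo"
  by (rule ext) (auto simp: comp_endo_def subst_def lam_aut_def lam_inv_aut_def id_endo_def mod_lemma1)

lemma comp_lam2: "0 < N \<Longrightarrow> comp_endo (lam_inv_aut N) (lam_aut N) = id_endo"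
  by (rule ext) (auto simp: comp_endo_def subst_def lam_aut_def lam_inv_aut_def id_endo_def mod_lemma2)

lemma comp_u1: "1 \<le> k \<Longrightarrow> comp_endo (u_aut k) (u_inv_aut k) = id_endo"
  by (rule ext) (auto simp: comp_endo_def subst_def u_aut_def u_inv_aut_def id_endo_def winv_def)

lemma comp_u2: "1 \<le> k \<Longrightarrow> comp_endo (u_inv_aut k) (u_aut k) = id_endo"
  by (rule ext) (auto simp: comp_endo_def subst_def u_aut_def u_inv_aut_def id_endo_def winv_def)



definition good :: "nat \<Rightarrow> endo \<Rightarrow> bool" where
  "good N \<alpha> \<longleftrightarrow> (\<forall>e. P \<alpha> e) \<and> (\<forall>e. is_ltree N e \<longrightarrow> is_ltree N (R \<alpha> e))"

lemma good_comp: "good N \<alpha> \<Longrightarrow> good N \<beta> \<Longrightarrow> good N (comp_endo \<alpha> \<beta>)"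
  unfolding good_def by (metis P_comp R_comp)

lemma good_id: "good N id_endo"
  unfolding good_def using P_id R_id by metis

lemma good_lam: "good N (lam_aut N)"
  unfolding good_def
proof (intro conjI allI impI)
  fix e show "P (lam_aut N) e" by (rule P_lam)
next
  fix e assume t: "is_ltree N e"
  have "is_ltree N (\<lambda>i. if i < N then e ((i + 1) mod N) else {})"
  proof (rule tree_relabel[OF t])
    show "\<forall>i<N. (i + 1) mod N < N" by auto
    show "\<forall>i<N. \<exists>j<N. (j + 1) mod N = i"
    proof (intro allI impI)
      fix i assume "i < N"
      then show "\<exists>j<N. (j + 1) mod N = i"
        by (intro exI[of _ "(i + N - 1) mod N"]) (auto simp: mod_lemma1)
    qed
  qed
  then show "is_ltree N (R (lam_aut N) e)" using R_lam[OF t] by simp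
qed

lemma good_lam_inv: "good N (lam_inv_aut N)"
  unfolding good_def
proof (intro conjI allI impI)
  fix e show "P (lam_inv_aut N) e" by (rule P_lam_inv)
next
  fix e assume t: "is_ltree N e"
  have "is_ltree N (\<lambda>i. if i < N then e ((i + N - 1) mod N) else {})"
  proof (rule tree_relabel[OF t])
    show "\<forall>i<N. (i + N - 1) mod N < N" by auto
    show "\<forall>i<N. \<exists>j<N. (j + N - 1) mod N = i"
    proof (intro allI impI)
      fix i assume "i < N"
      then show "\<exists>j<N. (j + N - 1) mod N = i"
        by (intro exI[of _ "(i + 1) mod N"]) (auto simp: mod_lemma2)
    qed
  qed
  then show "is_ltree N (R (lam_inv_aut N) e)" using R_lam_inv[OF t] by (simp add: lam_op_def)
qed

lemma good_u: "1 \<le> k \<Longrightarrow> k < N \<Longrightarrow> good N (u_aut k)"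
proof -
  assume k: "1 \<le> k" "k < N"
  have "is_ltree N (R (u_aut k) e)" if "is_ltree N e" for e
    using R_u[OF that k] tree_hurwitz[OF that, of "k - 1" k] k by simp
  then show ?thesis unfolding good_def using P_u by blast
qed

lemma good_u_inv: "1 \<le> k \<Longrightarrow> k < N \<Longrightarrow> good N (u_inv_aut k)"
proof -
  assume k: "1 \<le> k" "k < N"
  have "is_ltree N (R (u_inv_aut k) e)" if "is_ltree N e" for e
    using R_u_inv[OF that k] tree_hurwitz[OF that, of k "k - 1"] k by simp
  then show ?thesis unfolding good_def using P_u_inv by blast
qed

lemma gens_good: "g \<in> BC_gens N \<Longrightarrow> good N g"
  unfolding BC_gens_def using good_lam good_lam_inv good_u good_u_inv by auto

lemma gens_inv: "2 \<le> N \<Longrightarrow> g \<in> BC_gens N \<Longrightarrow>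
   \<exists>g'. good N g' \<and> comp_endo g g' = id_endo \<and> comp_endo g' g = id_endo"
proof -
  assume N: "2 \<le> N" and g: "g \<in> BC_gens N"
  then have N0: "0 < N" by simp
  from g consider "g = lam_aut N" | "g = lam_inv_aut N"
    | k where "k \<in> {1..N-1}" "g = u_aut k" | k where "k \<in> {1..N-1}" "g = u_inv_aut k"
    unfolding BC_gens_def by blast
  then show ?thesis
  proof cases
    case 1 then show ?thesis using good_lam_inv comp_lam1[OF N0] comp_lam2[OF N0] by blast
  next
    case 2 then show ?thesis using good_lam comp_lam1[OF N0] comp_lam2[OF N0] by blast
  next
    case (3 k)
    then have k: "1 \<le> k" "k < N" using N by auto
    then show ?thesis using 3 good_u_inv[OF k] comp_u1[OF k(1)] comp_u2[OF k(1)] by blast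
  next
    case (4 k)
    then have k: "1 \<le> k" "k < N" using N by auto
    then show ?thesis using 4 good_u[OF k] comp_u1[OF k(1)] comp_u2[OF k(1)] by blast
  qed
qed

lemma BC_good: "\<alpha> \<in> BC_set N \<Longrightarrow> good N \<alpha>"
  by (induction rule: BC_set.induct) (auto intro: good_id good_comp gens_good)



lemma iso_equiv: "equiv {e. is_ltree N e} (tree_iso_rel N)"
proof (rule equivI)
  show "tree_iso_rel N \<subseteq> {e. is_ltree N e} \<times> {e. is_ltree N e}"
    unfolding tree_iso_rel_def by auto
next
  show "refl_on {e. is_ltree N e} (tree_iso_rel N)"
    unfolding refl_on_def tree_iso_rel_def
    by (auto intro!: exI[of _ id])
next
  show "sym (tree_iso_rel N)"
  proof (rule symI)
    fix e e' assume "(e, e') \<in> tree_iso_rel N"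
    then obtain \<pi> where t: "is_ltree N e" "is_ltree N e'" and b: "bij_betw \<pi> {0..N} {0..N}"
      and h: "\<forall>i<N. e' i = \<pi> ` e i" unfolding tree_iso_rel_def by blast
    have "\<forall>i<N. e i = inv_into {0..N} \<pi> ` e' i"
      using h tree_sub[OF t(1)] b by (simp add: bij_betw_def inv_into_image_cancel)
    then show "(e', e) \<in> tree_iso_rel N"
      unfolding tree_iso_rel_def using t bij_betw_inv_into[OF b] by blast
  qed
next
  show "trans (tree_iso_rel N)"
  proof (rule transI)
    fix e1 e2 e3 assume "(e1, e2) \<in> tree_iso_rel N" "(e2, e3) \<in> tree_iso_rel N"
    then obtain \<pi>1 \<pi>2 where t: "is_ltree N e1" "is_ltree N e3" and b: "bij_betw \<pi>1 {0..N} {0..N}"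
      "bij_betw \<pi>2 {0..N} {0..N}"
      and h: "\<forall>i<N. e2 i = \<pi>1 ` e1 i" "\<forall>i<N. e3 i = \<pi>2 ` e2 i" unfolding tree_iso_rel_def by blast
    have "\<forall>i<N. e3 i = (\<pi>2 \<circ> \<pi>1) ` e1 i" using h by (simp add: image_comp)
    then show "(e1, e3) \<in> tree_iso_rel N"
      unfolding tree_iso_rel_def using t bij_betw_trans[OF b] by blast
  qed
qed

lemma ext_bij:
  assumes b: "bij_betw \<pi> {0..N} {0..(N::nat)}"
  shows "bij (\<lambda>x. if x \<le> N then \<pi> x else x)"
proof -
  let ?p = "\<lambda>x. if x \<le> N then \<pi> x else x"
  have r: "x \<le> N \<Longrightarrow> \<pi> x \<le> N" for x using b by (auto simp: bij_betw_def)
  have "inj ?p"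
  proof
    fix x y assume "?p x = ?p y"
    then show "x = y" using b r
      by (auto split: if_splits simp: bij_betw_def inj_on_def)
  qed
  moreover have "surj ?p"
  proof -
    have "y \<in> range ?p" for y
    proof (cases "y \<le> N")
      case True
      have "y \<in> \<pi> ` {0..N}" using b True by (auto simp: bij_betw_def)
      then obtain x where "x \<in> {0..N}" "y = \<pi> x" by blast
      then show ?thesis by (auto intro!: image_eqI[of _ _ x])
    next
      case False
      then show ?thesis by (auto intro!: image_eqI[of _ _ y])
    qed
    then show ?thesis by auto
  qed
  ultimately show ?thesis by (simp add: bij_def)
qed

lemma R_iso:
  assumes g: "good N \<alpha>" and iso: "(e, e') \<in> tree_iso_rel N"
  shows "(R \<alpha> e, R \<alpha> e') \<in> tree_iso_rel N"
proof -
  obtain \<pi> where t: "is_ltree N e" "is_ltree N e'" and b: "bij_betw \<pi> {0..N} {0..N}"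
    and h: "\<forall>i<N. e' i = \<pi> ` e i" using iso unfolding tree_iso_rel_def by blast
  define p where "p x = (if x \<le> N then \<pi> x else x)" for x
  have bp: "bij p" using ext_bij[OF b] unfolding p_def by simp
  have pe: "p ` S = \<pi> ` S" if "S \<subseteq> {0..N}" for S
    unfolding p_def by (rule image_cong) (use that in auto)
  have e': "e' = (\<lambda>i. p ` e i)"
  proof
    fix i show "e' i = p ` e i"
      by (cases "i < N") (use h pe tree_sub[OF t(1)] tree_empty[OF t(1)] tree_empty[OF t(2)] in auto)
  qed
  have RR: "R \<alpha> e' = (\<lambda>i. p ` R \<alpha> e i)" using R_conj[OF bp] e' by simp
  have t1: "is_ltree N (R \<alpha> e)" and t2: "is_ltree N (R \<alpha> e')" using g t unfolding good_def by auto
  have "\<forall>i<N. R \<alpha> e' i = \<pi> ` R \<alpha> e i" using RR pe tree_sub[OF t1] by simp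
  then show ?thesis unfolding tree_iso_rel_def using t1 t2 b by blast
qed

lemma class_in: "is_ltree N e \<Longrightarrow> tree_class N e \<in> tree_classes N"
  unfolding tree_class_def tree_classes_def by (rule quotientI) simp

lemma class_eq: "is_ltree N e \<Longrightarrow> is_ltree N e' \<Longrightarrow> tree_class N e = tree_class N e' \<longleftrightarrow> (e, e') \<in> tree_iso_rel N"
  unfolding tree_class_def by (simp add: equiv_class_eq_iff[OF iso_equiv])

lemma class_cases: "C \<in> tree_classes N \<Longrightarrow> (\<And>e. is_ltree N e \<Longrightarrow> C = tree_class N e \<Longrightarrow> thesis) \<Longrightarrow> thesis"
  unfolding tree_classes_def tree_class_def by (erule quotientE) simp

lemma class_self: "is_ltree N e \<Longrightarrow> e \<in> tree_class N e"
  unfolding tree_class_def using iso_equiv[of N] by (simp add: equiv_def refl_on_def)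

lemma class_mem: "e0 \<in> tree_class N e \<Longrightarrow> (e, e0) \<in> tree_iso_rel N"
  unfolding tree_class_def by simp

definition Rc :: "nat \<Rightarrow> endo \<Rightarrow> ltree set \<Rightarrow> ltree set" where
  "Rc N \<alpha> C = tree_class N (R \<alpha> (SOME e. e \<in> C))"

lemma Rc_class:
  assumes g: "good N \<alpha>" and t: "is_ltree N e"
  shows "Rc N \<alpha> (tree_class N e) = tree_class N (R \<alpha> e)"
proof -
  let ?e0 = "SOME e0. e0 \<in> tree_class N e"
  have "?e0 \<in> tree_class N e" using someI[of "\<lambda>x. x \<in> tree_class N e" e] class_self[OF t] by simp
  hence i: "(e, ?e0) \<in> tree_iso_rel N" by (rule class_mem)
  hence "(R \<alpha> e, R \<alpha> ?e0) \<in> tree_iso_rel N" by (rule R_iso[OF g])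
  moreover have "is_ltree N (R \<alpha> e)" "is_ltree N (R \<alpha> ?e0)"
    using i g t unfolding good_def tree_iso_rel_def by auto
  ultimately show ?thesis unfolding Rc_def using class_eq by metis
qed

lemma Rc_in: "good N \<alpha> \<Longrightarrow> C \<in> tree_classes N \<Longrightarrow> Rc N \<alpha> C \<in> tree_classes N"
  by (erule class_cases) (auto simp: Rc_class class_in good_def)

lemma Rc_comp: "good N \<alpha> \<Longrightarrow> good N \<beta> \<Longrightarrow> C \<in> tree_classes N \<Longrightarrow>
    Rc N (comp_endo \<alpha> \<beta>) C = Rc N \<beta> (Rc N \<alpha> C)"
  apply (erule class_cases)
  apply (simp add: Rc_class good_comp)
  apply (simp add: good_def R_comp Rc_class)
  done

lemma Rc_id: "C \<in> tree_classes N \<Longrightarrow> Rc N id_endo C = C"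
  by (erule class_cases) (simp add: Rc_class good_id R_id)

lemma Rc_bij: assumes N: "2 \<le> N" and a: "\<alpha> \<in> BC_set N"
  shows "bij_betw (Rc N \<alpha>) (tree_classes N) (tree_classes N)"
  using a
proof (induction rule: BC_set.induct)
  case BC_id
  then show ?case by (simp add: bij_betw_cong[of _ _ id] Rc_id)
next
  case (BC_step g x)
  obtain g' where g': "good N g'" "comp_endo g g' = id_endo" "comp_endo g' g = id_endo"
    using gens_inv[OF N BC_step(1)] by blast
  have gg: "good N g" using gens_good[OF BC_step(1)] .
  have bg: "bij_betw (Rc N g) (tree_classes N) (tree_classes N)"
  proof (rule bij_betw_byWitness[where f' = "Rc N g'"])
    show "\<forall>a\<in>tree_classes N. Rc N g' (Rc N g a) = a"
      using Rc_comp[OF gg g'(1)] g'(2) Rc_id by metis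
    show "\<forall>a'\<in>tree_classes N. Rc N g (Rc N g' a') = a'"
      using Rc_comp[OF g'(1) gg] g'(3) Rc_id by metis
    show "Rc N g ` tree_classes N \<subseteq> tree_classes N" using Rc_in[OF gg] by blast
    show "Rc N g' ` tree_classes N \<subseteq> tree_classes N" using Rc_in[OF g'(1)] by blast
  qed
  have "bij_betw (Rc N x \<circ> Rc N g) (tree_classes N) (tree_classes N)"
    using bij_betw_trans[OF bg BC_step.IH] .
  moreover have "\<forall>C\<in>tree_classes N. Rc N (comp_endo g x) C = (Rc N x \<circ> Rc N g) C"
    using Rc_comp[OF gg BC_good[OF BC_step(2)]] by simp
  ultimately show ?case using bij_betw_cong by (metis (no_types, lifting))
qed



lemma u_op_eq:
  assumes t: "is_ltree N e" and k: "1 \<le> k" "k < N"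
  shows "R (u_inv_aut k) e = u_op k e"
proof -
  have k1: "k - 1 < N" "k - 1 \<noteq> k" using k by auto
  obtain a b where ab: "a \<noteq> b" "e (k - 1) = {a, b}" using tree_edge[OF t k1(1)] by blast
  obtain c d where cd: "c \<noteq> d" "e k = {c, d}" using tree_edge[OF t k(2)] by blast
  have ne: "e (k - 1) \<noteq> e k" using tree_inj[OF t] k1 k by (auto simp: inj_on_def)
  have img: "tr (e (k - 1)) ` e k = (if e (k - 1) \<inter> e k = {} then e k
      else (e (k - 1) - e k) \<union> (e k - e (k - 1)))"
    using ab cd ne by (auto simp: tr_pair transpose_def)
  show ?thesis unfolding u_op_def R_u_inv[OF t k] img using k1
    by (auto simp: fun_upd_twist)
qed

definition rho :: "nat \<Rightarrow> endo \<Rightarrow> ltree set \<Rightarrow> ltree set" where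
  "rho N \<alpha> = restrict (inv_into (tree_classes N) (Rc N \<alpha>)) (tree_classes N)"

lemma Rc_gen_bij: assumes N: "2 \<le> N" and g: "g \<in> BC_gens N"
  shows "bij_betw (Rc N g) (tree_classes N) (tree_classes N)"
proof -
  have "comp_endo g id_endo \<in> BC_set N" using g by (intro BC_step BC_id)
  hence "bij_betw (Rc N (comp_endo g id_endo)) (tree_classes N) (tree_classes N)" by (rule Rc_bij[OF N])
  moreover have "\<forall>C\<in>tree_classes N. Rc N (comp_endo g id_endo) C = Rc N g C"
    using Rc_comp[OF gens_good[OF g] good_id] Rc_id Rc_in[OF gens_good[OF g]] by simp
  ultimately show ?thesis using bij_betw_cong by (metis (no_types, lifting))
qed

lemma rho_gen:
  assumes N: "2 \<le> N" and g: "g \<in> BC_gens N" and t: "is_ltree N e" and t': "is_ltree N e'"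
    and eq: "R g e' = e"
  shows "rho N g (tree_class N e) = tree_class N e'"
proof -
  have b: "bij_betw (Rc N g) (tree_classes N) (tree_classes N)" by (rule Rc_gen_bij[OF N g])
  have "Rc N g (tree_class N e') = tree_class N e" using Rc_class[OF gens_good[OF g] t'] eq by simp
  hence "inv_into (tree_classes N) (Rc N g) (tree_class N e) = tree_class N e'"
    by (intro inv_into_f_eq[OF bij_betw_imp_inj_on[OF b] class_in[OF t']])
  then show ?thesis unfolding rho_def using class_in[OF t] by simp
qed

theorem mainTheorem10:
  fixes N :: nat
  assumes "N \<ge> 2"
  shows "\<exists>\<rho>. \<rho> \<in> hom (BC N) (BijGroup (tree_classes N)) \<and>
    (\<forall>e. is_ltree N e \<longrightarrow>
       \<rho> (lam_aut N) (tree_class N e) = tree_class N (lam_op N e) \<and>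
       (\<forall>k\<in>{1..N-1}. \<rho> (u_aut k) (tree_class N e) = tree_class N (u_op k e)))"
proof (intro exI conjI allI impI ballI)
  note N = assms
  let ?S = "tree_classes N"
  have rho_bij: "rho N \<alpha> \<in> Bij ?S" if a: "\<alpha> \<in> BC_set N" for \<alpha>
  proof -
    have "bij_betw (inv_into ?S (Rc N \<alpha>)) ?S ?S" using bij_betw_inv_into[OF Rc_bij[OF N a]] .
    hence "bij_betw (rho N \<alpha>) ?S ?S" unfolding rho_def using bij_betw_cong by (metis (no_types, lifting) restrict_apply')
    then show ?thesis unfolding Bij_def rho_def by simp
  qed
  show "rho N \<in> hom (BC N) (BijGroup ?S)"
  proof (rule homI)
    fix \<alpha> assume "\<alpha> \<in> carrier (BC N)"
    then show "rho N \<alpha> \<in> carrier (BijGroup ?S)" using rho_bij by (simp add: BC_def BijGroup_def)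
  next
    fix \<alpha> \<beta> assume "\<alpha> \<in> carrier (BC N)" "\<beta> \<in> carrier (BC N)"
    hence a: "\<alpha> \<in> BC_set N" and b: "\<beta> \<in> BC_set N" by (simp_all add: BC_def)
    have ga: "good N \<alpha>" and gb: "good N \<beta>" using a b by (simp_all add: BC_good)
    have ba: "bij_betw (Rc N \<alpha>) ?S ?S" and bb: "bij_betw (Rc N \<beta>) ?S ?S" using Rc_bij[OF N] a b by auto
    have cmp: "\<forall>C\<in>?S. Rc N (comp_endo \<alpha> \<beta>) C = (Rc N \<beta> \<circ> Rc N \<alpha>) C"
      using Rc_comp[OF ga gb] by simp
    have bab: "bij_betw (Rc N (comp_endo \<alpha> \<beta>)) ?S ?S"
      using bij_betw_trans[OF ba bb] cmp bij_betw_cong by (metis (no_types, lifting))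
    have "rho N (comp_endo \<alpha> \<beta>) = compose ?S (rho N \<alpha>) (rho N \<beta>)"
    proof
      fix C show "rho N (comp_endo \<alpha> \<beta>) C = compose ?S (rho N \<alpha>) (rho N \<beta>) C"
      proof (cases "C \<in> ?S")
        case False then show ?thesis by (simp add: rho_def compose_def)
      next
        case True
        define X where "X = inv_into ?S (Rc N \<beta>) C"
        define D where "D = inv_into ?S (Rc N \<alpha>) X"
        have X: "X \<in> ?S" "Rc N \<beta> X = C" unfolding X_def using bb True
          by (metis bij_betw_def inv_into_into, metis bij_betw_def f_inv_into_f)
        have D: "D \<in> ?S" "Rc N \<alpha> D = X" unfolding D_def using ba X(1)
          by (metis bij_betw_def inv_into_into, metis bij_betw_def f_inv_into_f)
        have "Rc N (comp_endo \<alpha> \<beta>) D = C" using cmp D X by simp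
        hence "inv_into ?S (Rc N (comp_endo \<alpha> \<beta>)) C = D"
          by (intro inv_into_f_eq[OF bij_betw_imp_inj_on[OF bab] D(1)])
        moreover have "compose ?S (rho N \<alpha>) (rho N \<beta>) C = D"
          using True X D unfolding compose_def rho_def X_def D_def by simp
        ultimately show ?thesis using True unfolding rho_def by simp
      qed
    qed
    then show "rho N (\<alpha> \<otimes>\<^bsub>BC N\<^esub> \<beta>) = rho N \<alpha> \<otimes>\<^bsub>BijGroup ?S\<^esub> rho N \<beta>"
      using rho_bij[OF a] rho_bij[OF b] by (simp add: BijGroup_def BC_def)
  qed
next
  fix e assume t: "is_ltree N e"
  have N0: "0 < N" using assms by simp
  have gl: "lam_aut N \<in> BC_gens N" by (simp add: BC_gens_def)
  have t': "is_ltree N (lam_op N e)" using gens_good[of "lam_inv_aut N" N] t R_lam_inv[OF t]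
    by (simp add: BC_gens_def good_def) metis
  have "R (lam_aut N) (lam_op N e) = e"
    using R_comp[OF P_lam_inv[of N e], of "lam_aut N"] comp_lam2[OF N0] R_lam_inv[OF t] R_id[OF t] by simp
  then show "rho N (lam_aut N) (tree_class N e) = tree_class N (lam_op N e)"
    by (rule rho_gen[OF assms gl t t'])
next
  fix e k assume t: "is_ltree N e" and kk: "k \<in> {1..N-1}"
  have k: "1 \<le> k" "k < N" using kk assms by auto
  have gu: "u_aut k \<in> BC_gens N" using kk by (auto simp: BC_gens_def)
  have t': "is_ltree N (u_op k e)" using good_u_inv[OF k] t u_op_eq[OF t k]
    by (simp add: good_def) metis
  have "R (u_aut k) (u_op k e) = e"
    using R_comp[OF P_u_inv[of k e], of "u_aut k"] comp_u2[OF k(1)] u_op_eq[OF t k] R_id[OF t] by simp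
  then show "rho N (u_aut k) (tree_class N e) = tree_class N (u_op k e)"
    by (rule rho_gen[OF assms gu t t'])
qed

end
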